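(* If $G$ is a $K_t$-minor-free graph of diameter $d$ and order $n$, with a resolving set of size $k$, then $n\leq (dk+1)^{t-1}+1$.
   Context: A set $R$ of vertices of a graph $G$ is a resolving set if for each pair $u,v$ of distinct vertices there is $x\in R$ with $d(x,u)\neq d(x,v)$. A graph is $K_t$-minor-free if the complete graph $K_t$ is not a minor of it. *)

theory Defs
  imports Main
begin

definition simple_graph :: "'a set \<Rightarrow> ('a \<Rightarrow> 'a \<Rightarrow> bool) \<Rightarrow> bool" where
  "simple_graph V E \<longleftrightarrow> finite V \<and> (\<forall>x y. E x y \<longrightarrow> x \<in> V \<and> y \<in> V)
     \<and> (\<forall>x y. E x y \<longrightarrow> E y x) \<and> (\<forall>x. \<not> E x x)"

definition walk_in :: "'a set \<Rightarrow> ('a \<Rightarrow> 'a \<Rightarrow> bool) \<Rightarrow> 'a list \<Rightarrow> bool" where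
  "walk_in S E xs \<longleftrightarrow> xs \<noteq> [] \<and> set xs \<subseteq> S
     \<and> (\<forall>i. Suc i < length xs \<longrightarrow> E (xs ! i) (xs ! Suc i))"

definition connected_in :: "'a set \<Rightarrow> ('a \<Rightarrow> 'a \<Rightarrow> bool) \<Rightarrow> bool" where
  "connected_in S E \<longleftrightarrow> (\<forall>u\<in>S. \<forall>v\<in>S. \<exists>xs. walk_in S E xs \<and> hd xs = u \<and> last xs = v)"

definition gdist :: "'a set \<Rightarrow> ('a \<Rightarrow> 'a \<Rightarrow> bool) \<Rightarrow> 'a \<Rightarrow> 'a \<Rightarrow> nat" where
  "gdist V E u v = (LEAST l. \<exists>xs. walk_in V E xs \<and> hd xs = u \<and> last xs = v \<and> length xs = Suc l)"

definition diameter :: "'a set \<Rightarrow> ('a \<Rightarrow> 'a \<Rightarrow> bool) \<Rightarrow> nat" where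
  "diameter V E = Max {gdist V E u v | u v. u \<in> V \<and> v \<in> V}"

definition resolving_set :: "'a set \<Rightarrow> ('a \<Rightarrow> 'a \<Rightarrow> bool) \<Rightarrow> 'a set \<Rightarrow> bool" where
  "resolving_set V E R \<longleftrightarrow> R \<subseteq> V \<and>
     (\<forall>u\<in>V. \<forall>v\<in>V. u \<noteq> v \<longrightarrow> (\<exists>x\<in>R. gdist V E x u \<noteq> gdist V E x v))"

definition has_complete_minor :: "'a set \<Rightarrow> ('a \<Rightarrow> 'a \<Rightarrow> bool) \<Rightarrow> nat \<Rightarrow> bool" where
  "has_complete_minor V E t \<longleftrightarrow> (\<exists>B :: nat \<Rightarrow> 'a set.
     (\<forall>i<t. B i \<noteq> {} \<and> B i \<subseteq> V \<and> connected_in (B i) E) \<and>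
     (\<forall>i<t. \<forall>j<t. i \<noteq> j \<longrightarrow> B i \<inter> B j = {} \<and> (\<exists>x\<in>B i. \<exists>y\<in>B j. E x y)))"

end

theory Submission
  imports Defs
begin


lemma walk_in_append:
  assumes "walk_in S E xs" "walk_in S E ys" "last xs = hd ys"
  shows "walk_in S E (xs @ tl ys)"
proof -
  have xs: "xs \<noteq> []" "set xs \<subseteq> S" "\<And>i. Suc i < length xs \<Longrightarrow> E (xs ! i) (xs ! Suc i)"
    using assms(1) unfolding walk_in_def by auto
  have ys: "ys \<noteq> []" "set ys \<subseteq> S" "\<And>i. Suc i < length ys \<Longrightarrow> E (ys ! i) (ys ! Suc i)"
    using assms(2) unfolding walk_in_def by auto
  have "E ((xs @ tl ys) ! i) ((xs @ tl ys) ! Suc i)" if "Suc i < length (xs @ tl ys)" for i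
  proof -
    consider "Suc i < length xs" | "Suc i = length xs" | "Suc i > length xs" by linarith
    then show ?thesis
    proof cases
      case 1 then show ?thesis using xs(3)[of i] by (simp add: nth_append)
    next
      case 2
      have "xs ! i = last xs" using 2 xs(1) proof -
        have "i = length xs - 1" using 2 by simp
        then show ?thesis using xs(1) by (simp add: last_conv_nth)
      qed
      moreover have "ys ! 0 = hd ys" using ys(1) by (simp add: hd_conv_nth)
      moreover have "(xs @ tl ys) ! Suc i = ys ! 1" using 2 that ys(1)
        by (simp add: nth_append nth_tl)
      ultimately show ?thesis using 2 ys(3)[of 0] that assms(3)
        by (auto simp: nth_append)
    next
      case 3
      have a: "(xs @ tl ys) ! i = ys ! (i - length xs + 1)" using 3 that ys(1)
        by (simp add: nth_append nth_tl)
      have b: "(xs @ tl ys) ! Suc i = ys ! (Suc (i - length xs + 1))" using 3 that ys(1)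
        by (simp add: nth_append nth_tl Suc_diff_le)
      have "Suc (i - length xs + 1) < length ys" using 3 that by auto
      then show ?thesis using ys(3)[of "i - length xs + 1"] a b by simp
    qed
  qed
  moreover have "set (tl ys) \<subseteq> set ys" by (cases ys) auto
  ultimately show ?thesis using xs ys unfolding walk_in_def by auto
qed

lemma walk_in_rev:
  assumes "walk_in S E xs" "\<And>x y. E x y \<Longrightarrow> E y x"
  shows "walk_in S E (rev xs)"
proof -
  have "E (rev xs ! i) (rev xs ! Suc i)" if "Suc i < length (rev xs)" for i
  proof -
    let ?j = "length xs - Suc (Suc i)"
    have "rev xs ! i = xs ! Suc ?j" using that by (simp add: rev_nth Suc_diff_Suc)
    moreover have "rev xs ! Suc i = xs ! ?j" using that by (simp add: rev_nth)
    moreover have "Suc ?j < length xs" using that by simp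
    ultimately show ?thesis using assms unfolding walk_in_def by auto
  qed
  then show ?thesis using assms(1) unfolding walk_in_def by auto
qed

lemma walk_in_take:
  assumes "walk_in S E xs" "q < length xs"
  shows "walk_in S E (take (Suc q) xs)"
  using assms unfolding walk_in_def
  by (auto dest: in_set_takeD)

lemma walk_in_drop:
  assumes "walk_in S E xs" "q < length xs"
  shows "walk_in S E (drop q xs)"
  using assms unfolding walk_in_def
  by (auto dest: in_set_dropD)

context
  fixes V :: "'a set" and E :: "'a \<Rightarrow> 'a \<Rightarrow> bool"
  assumes G: "simple_graph V E" and C: "connected_in V E"
begin

lemma symE: "E x y \<Longrightarrow> E y x" using G unfolding simple_graph_def by blast

lemma gd_walk:
  assumes "u \<in> V" "v \<in> V"
  shows "\<exists>xs. walk_in V E xs \<and> hd xs = u \<and> last xs = v \<and> length xs = Suc (gdist V E u v)"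
proof -
  obtain xs where xs: "walk_in V E xs" "hd xs = u" "last xs = v"
    using C assms unfolding connected_in_def by blast
  have ne: "xs \<noteq> []" using xs unfolding walk_in_def by auto
  have "\<exists>l. \<exists>xs. walk_in V E xs \<and> hd xs = u \<and> last xs = v \<and> length xs = Suc l"
    using xs ne by (intro exI[of _ "length xs - 1"] exI[of _ xs]) auto
  then show ?thesis unfolding gdist_def by (rule LeastI_ex)
qed

lemma gd_le:
  assumes "walk_in V E xs"
  shows "gdist V E (hd xs) (last xs) \<le> length xs - 1"
proof -
  have ne: "xs \<noteq> []" using assms unfolding walk_in_def by auto
  show ?thesis unfolding gdist_def
    by (rule Least_le) (use assms ne in auto)
qed

lemma gd_refl: "u \<in> V \<Longrightarrow> gdist V E u u = 0"
  using gd_le[of "[u]"] unfolding walk_in_def by auto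

lemma gd_sym:
  assumes "u \<in> V" "v \<in> V"
  shows "gdist V E u v = gdist V E v u"
proof -
  have le: "gdist V E a b \<le> gdist V E b a" if ab: "a \<in> V" "b \<in> V" for a b
  proof -
    obtain xs where xs: "walk_in V E xs" "hd xs = b" "last xs = a" "length xs = Suc (gdist V E b a)"
      using gd_walk[OF ab(2) ab(1)] by blast
    have ne: "xs \<noteq> []" using xs unfolding walk_in_def by auto
    have "walk_in V E (rev xs)" using walk_in_rev xs(1) symE by blast
    then have "gdist V E (hd (rev xs)) (last (rev xs)) \<le> length (rev xs) - 1" by (rule gd_le)
    then show ?thesis using xs ne by (simp add: hd_rev last_rev)
  qed
  show ?thesis using le assms by (simp add: le_antisym)
qed

lemma gd_tri:
  assumes "u \<in> V" "v \<in> V" "w \<in> V"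
  shows "gdist V E u w \<le> gdist V E u v + gdist V E v w"
proof -
  obtain xs where xs: "walk_in V E xs" "hd xs = u" "last xs = v" "length xs = Suc (gdist V E u v)"
    using gd_walk assms by blast
  obtain ys where ys: "walk_in V E ys" "hd ys = v" "last ys = w" "length ys = Suc (gdist V E v w)"
    using gd_walk assms by blast
  have ne: "xs \<noteq> []" "ys \<noteq> []" using xs ys unfolding walk_in_def by auto
  have "walk_in V E (xs @ tl ys)" using walk_in_append[OF xs(1) ys(1)] xs(3) ys(2) by auto
  from gd_le[OF this] show ?thesis using xs ys ne
    by (cases ys) auto
qed

lemma gd_edge: "E u v \<Longrightarrow> gdist V E u v \<le> 1"
  using gd_le[of "[u,v]"] G unfolding walk_in_def simple_graph_def
  by (auto simp: less_Suc_eq)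

lemma gd_pos:
  assumes "walk_in V E xs" "m < length xs"
  shows "gdist V E (hd xs) (xs ! m) \<le> m" "gdist V E (xs ! m) (last xs) \<le> length xs - 1 - m"
proof -
  have ne: "xs \<noteq> []" using assms unfolding walk_in_def by auto
  have "gdist V E (hd (take (Suc m) xs)) (last (take (Suc m) xs)) \<le> length (take (Suc m) xs) - 1"
    by (rule gd_le[OF walk_in_take[OF assms]])
  moreover have "hd (take (Suc m) xs) = hd xs" using ne by simp
  moreover have "last (take (Suc m) xs) = xs ! m"
  proof -
    have "take (Suc m) xs \<noteq> []" using ne by simp
    then have "last (take (Suc m) xs) = take (Suc m) xs ! (length (take (Suc m) xs) - 1)"
      by (rule last_conv_nth)
    also have "\<dots> = xs ! m" using assms(2) by simp
    finally show ?thesis .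
  qed
  moreover have "length (take (Suc m) xs) - 1 = m" using assms(2) by simp
  ultimately show "gdist V E (hd xs) (xs ! m) \<le> m" by simp
  have "gdist V E (hd (drop m xs)) (last (drop m xs)) \<le> length (drop m xs) - 1"
    by (rule gd_le[OF walk_in_drop[OF assms]])
  then show "gdist V E (xs ! m) (last xs) \<le> length xs - 1 - m" using assms ne
    by (simp add: hd_drop_conv_nth)
qed

lemma walk_nth_V: "walk_in V E xs \<Longrightarrow> m < length xs \<Longrightarrow> xs ! m \<in> V"
  unfolding walk_in_def by auto

lemma walk_hd_last_V: "walk_in V E xs \<Longrightarrow> hd xs \<in> V \<and> last xs \<in> V"
  unfolding walk_in_def by auto

lemma geo:
  assumes "walk_in V E xs" "length xs = Suc (gdist V E (hd xs) (last xs))" "m < length xs"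
  shows "gdist V E (hd xs) (xs ! m) = m" "gdist V E (xs ! m) (last xs) = length xs - 1 - m"
proof -
  have V: "hd xs \<in> V" "last xs \<in> V" "xs ! m \<in> V"
    using assms walk_nth_V walk_hd_last_V by auto
  have t: "gdist V E (hd xs) (last xs) \<le> gdist V E (hd xs) (xs ! m) + gdist V E (xs ! m) (last xs)"
    using gd_tri V by blast
  show "gdist V E (hd xs) (xs ! m) = m" "gdist V E (xs ! m) (last xs) = length xs - 1 - m"
    using t gd_pos[OF assms(1,3)] assms(2,3) by linarith+
qed

end



definition shatters :: "'b set set \<Rightarrow> 'b set \<Rightarrow> bool" where
  "shatters F Y \<longleftrightarrow> (\<forall>S\<subseteq>Y. \<exists>A\<in>F. A \<inter> Y = S)"

lemma ss_zero:
  assumes "\<forall>e. \<not> shatters F {e}"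
  shows "card F \<le> 1"
proof -
  have "\<forall>A\<in>F. \<forall>B\<in>F. A = B"
  proof (intro ballI)
    fix A B assume AB: "A \<in> F" "B \<in> F"
    show "A = B"
    proof (rule ccontr)
      assume "A \<noteq> B"
      then obtain e where e: "(e \<in> A \<and> e \<notin> B) \<or> (e \<in> B \<and> e \<notin> A)" by blast
      have "shatters F {e}" unfolding shatters_def
      proof (intro allI impI)
        fix S assume "S \<subseteq> {e}"
        then have "S = {} \<or> S = {e}" by blast
        then show "\<exists>A\<in>F. A \<inter> {e} = S" using e AB by auto
      qed
      then show False using assms by blast
    qed
  qed
  then show ?thesis by (cases "finite F") (auto simp: card_le_Suc0_iff_eq)
qed

lemma sauer_shelah:
  assumes "finite X"
  shows "F \<subseteq> Pow X \<Longrightarrow> (\<forall>Y\<subseteq>X. card Y = Suc D \<longrightarrow> \<not> shatters F Y)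
         \<Longrightarrow> card F \<le> (card X + 1) ^ D"
  using assms
proof (induction X arbitrary: F D rule: finite_induct)
  case empty
  then have "F \<subseteq> {{}}" by auto
  then have "card F \<le> card {{}::'a set}" using card_mono[of "{{}::'a set}" F] by simp
  then show ?case by simp
next
  case (insert a X)
  show ?case
  proof (cases D)
    case 0
    have "\<forall>e. \<not> shatters F {e}"
    proof (intro allI notI)
      fix e assume sh: "shatters F {e}"
      have "e \<in> insert a X"
      proof -
        obtain A where "A \<in> F" "A \<inter> {e} = {e}" using sh unfolding shatters_def by blast
        then show ?thesis using insert.prems(1) by auto
      qed
      then show False using insert.prems(2) sh 0 by auto
    qed
    then show ?thesis using ss_zero 0 by simp
  next
    case (Suc D')
    define g where "g = (\<lambda>A. A - {a})"
    define F0 where "F0 = g ` F"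
    define F1 where "F1 = {A. A \<in> F \<and> a \<notin> A \<and> insert a A \<in> F}"
    have finF: "finite F" using insert.prems(1) insert.hyps(1)
      by (meson finite_Pow_iff finite_insert finite_subset)
    have F0X: "F0 \<subseteq> Pow X" using insert.prems(1) unfolding F0_def g_def by auto
    have F1X: "F1 \<subseteq> Pow X" using insert.prems(1) unfolding F1_def by auto
    have sh0: "\<forall>Y\<subseteq>X. card Y = Suc D \<longrightarrow> \<not> shatters F0 Y"
    proof (intro allI impI notI)
      fix Y assume Y: "Y \<subseteq> X" "card Y = Suc D" and sh: "shatters F0 Y"
      have "shatters F Y" unfolding shatters_def
      proof (intro allI impI)
        fix S assume "S \<subseteq> Y"
        then obtain B where "B \<in> F0" "B \<inter> Y = S" using sh unfolding shatters_def by blast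
        then obtain A where "A \<in> F" "B = A - {a}" unfolding F0_def g_def by blast
        then show "\<exists>A\<in>F. A \<inter> Y = S" using \<open>B \<inter> Y = S\<close> Y insert.hyps(2) by auto
      qed
      then show False using insert.prems(2) Y by auto
    qed
    have sh1: "\<forall>Y\<subseteq>X. card Y = Suc D' \<longrightarrow> \<not> shatters F1 Y"
    proof (intro allI impI notI)
      fix Y assume Y: "Y \<subseteq> X" "card Y = Suc D'" and sh: "shatters F1 Y"
      have fY: "finite Y" using Y insert.hyps(1) finite_subset by blast
      have aY: "a \<notin> Y" using Y insert.hyps(2) by auto
      have "shatters F (insert a Y)" unfolding shatters_def
      proof (intro allI impI)
        fix S assume S: "S \<subseteq> insert a Y"
        then obtain B where B: "B \<in> F1" "B \<inter> Y = S - {a}" using sh unfolding shatters_def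
          by (metis Diff_subset_conv insert_is_Un sup_commute)
        show "\<exists>A\<in>F. A \<inter> insert a Y = S"
        proof (cases "a \<in> S")
          case True
          then show ?thesis using B S unfolding F1_def by (intro bexI[of _ "insert a B"]) auto
        next
          case False
          then show ?thesis using B S unfolding F1_def by (intro bexI[of _ B]) auto
        qed
      qed
      moreover have "card (insert a Y) = Suc D" using fY aY Y Suc by simp
      moreover have "insert a Y \<subseteq> insert a X" using Y by auto
      ultimately show False using insert.prems(2) by blast
    qed
    have c0: "card F0 \<le> (card X + 1) ^ D" using insert.IH[OF F0X sh0] .
    have c1: "card F1 \<le> (card X + 1) ^ D'" using insert.IH[OF F1X sh1] .
    define Fn where "Fn = {A \<in> F. a \<notin> A}"
    define Fa where "Fa = {A \<in> F. a \<in> A}"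
    have "F = Fn \<union> Fa" "Fn \<inter> Fa = {}" unfolding Fn_def Fa_def by auto
    then have cF: "card F = card Fn + card Fa" using finF
      by (metis card_Un_disjoint finite_Un)
    have inj: "inj_on g Fa" unfolding inj_on_def Fa_def g_def by auto
    have cFa: "card (g ` Fa) = card Fa" using card_image[OF inj] .
    have fin1: "finite Fn" "finite (g ` Fa)" using finF unfolding Fn_def Fa_def by auto
    have "card Fn + card (g ` Fa) = card (Fn \<union> g ` Fa) + card (Fn \<inter> g ` Fa)"
      using card_Un_Int[OF fin1] .
    moreover have "Fn \<union> g ` Fa \<subseteq> F0" unfolding Fn_def F0_def g_def Fa_def by auto
    moreover have "Fn \<inter> g ` Fa \<subseteq> F1"
    proof
      fix B assume "B \<in> Fn \<inter> g ` Fa"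
      then obtain A where A: "B \<in> F" "a \<notin> B" "A \<in> F" "a \<in> A" "B = A - {a}"
        unfolding Fn_def Fa_def g_def by auto
      then have "insert a B = A" by auto
      then show "B \<in> F1" using A unfolding F1_def by auto
    qed
    moreover have "finite F0" "finite F1" using finF unfolding F0_def F1_def by auto
    ultimately have "card F \<le> card F0 + card F1" using cF cFa
      by (metis add_le_mono card_mono)
    also have "\<dots> \<le> (card X + 1) ^ D + (card X + 1) ^ D'" using c0 c1 by simp
    also have "\<dots> \<le> (card (insert a X) + 1) ^ D"
    proof -
      have "(card X + 1) ^ D' \<le> (card X + 2) ^ D'" by (rule power_mono) auto
      then have "(card X + 1) ^ D + (card X + 1) ^ D' \<le> (card X + 2) ^ D"
        using Suc by (simp add: algebra_simps add_mono mult_le_mono2)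
      then show ?thesis using insert.hyps by simp
    qed
    finally show ?thesis .
  qed
qed



definition slack :: "'a set \<Rightarrow> ('a \<Rightarrow> 'a \<Rightarrow> bool) \<Rightarrow> (nat \<Rightarrow> 'a) \<Rightarrow> (nat \<Rightarrow> nat) \<Rightarrow> nat \<Rightarrow> 'a \<Rightarrow> int" where
  "slack V E x r l z = int (r l) - int (gdist V E (x l) z)"

lemma path_props:
  assumes G: "simple_graph V E" and C: "connected_in V E"
    and xV: "x i \<in> V" "x j \<in> V" and wV: "w \<in> V"
    and wi: "gdist V E (x i) w \<le> r i" and wj: "gdist V E (x j) w \<le> r j"
    and wl: "\<And>l. l < t \<Longrightarrow> l \<noteq> i \<Longrightarrow> l \<noteq> j \<Longrightarrow> x l \<in> V \<and> r l < gdist V E (x l) w"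
  shows "\<exists>p. walk_in V E p \<and> hd p = x i \<and> last p = x j \<and>
    (\<forall>q<length p. \<forall>l<t. l \<noteq> i \<longrightarrow> l \<noteq> j \<longrightarrow>
        slack V E x r l (p ! q) < max (slack V E x r i (p ! q)) (slack V E x r j (p ! q))) \<and>
    (\<forall>q. Suc q < length p \<longrightarrow>
        slack V E x r i (p ! Suc q) - slack V E x r j (p ! Suc q) \<le> slack V E x r i (p ! q) - slack V E x r j (p ! q))"
proof -
  note tri = gd_tri[OF G C] and sym = gd_sym[OF G C] and geo = geo[OF G C]
  define a where "a = gdist V E (x i) w"
  define b where "b = gdist V E w (x j)"
  obtain al where al: "walk_in V E al" "hd al = x i" "last al = w" "length al = Suc a"
    using gd_walk[OF G C xV(1) wV] unfolding a_def by blast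
  obtain be where be: "walk_in V E be" "hd be = w" "last be = x j" "length be = Suc b"
    using gd_walk[OF G C wV xV(2)] unfolding b_def by blast
  have ne: "al \<noteq> []" "be \<noteq> []" using al be by auto
  define p where "p = al @ tl be"
  have pw: "walk_in V E p" unfolding p_def using walk_in_append[OF al(1) be(1)] al(3) be(2) by simp
  have lp: "length p = a + b + 1" unfolding p_def using al be by (cases be) auto
  have hp: "hd p = x i" unfolding p_def using al ne by simp
  have lastp: "last p = x j"
  proof (cases "tl be = []")
    case True
    then have "be = [w]" using be ne by (cases be) auto
    then show ?thesis unfolding p_def using al be by simp
  next
    case False
    then show ?thesis unfolding p_def using be ne by (cases be) auto
  qed
  have F1: "p ! q = al ! q" if "q \<le> a" for q
    unfolding p_def using that al(4) by (simp add: nth_append)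
  have F2: "p ! q = be ! (q - a)" if "a \<le> q" "q \<le> a + b" for q
  proof (cases "q = a")
    case True
    have "al ! a = last al" using al(4) ne by (simp add: last_conv_nth)
    moreover have "be ! 0 = hd be" using ne by (simp add: hd_conv_nth)
    ultimately show ?thesis using True F1[of a] al(3) be(2) by simp
  next
    case False
    then have "p ! q = tl be ! (q - Suc a)" unfolding p_def using that al(4) by (simp add: nth_append)
    also have "\<dots> = be ! (q - a)" using that False be(4) by (simp add: nth_tl Suc_diff_Suc)
    finally show ?thesis .
  qed
  have alg: "gdist V E (x i) (al ! m) = m" "gdist V E (al ! m) w = a - m" "al ! m \<in> V" if "m \<le> a" for m
    using geo[of al m] al that walk_nth_V[OF G C al(1), of m] unfolding a_def by auto
  have beg: "gdist V E w (be ! m) = m" "gdist V E (be ! m) (x j) = b - m" "be ! m \<in> V" if "m \<le> b" for m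
    using geo[of be m] be that walk_nth_V[OF G C be(1), of m] unfolding b_def by auto
  have ba: "b = gdist V E (x j) w" unfolding b_def using sym xV wV by simp
  have P2: "slack V E x r l (p ! q) < max (slack V E x r i (p ! q)) (slack V E x r j (p ! q))"
    if q: "q < length p" and l: "l < t" "l \<noteq> i" "l \<noteq> j" for q l
  proof (cases "q \<le> a")
    case True
    define z where "z = al ! q"
    have z: "p ! q = z" "gdist V E (x i) z = q" "gdist V E z w = a - q" "z \<in> V"
      using F1[OF True] alg[OF True] unfolding z_def by auto
    have "gdist V E (x l) w \<le> gdist V E (x l) z + gdist V E z w" using tri wl[OF l] z wV by blast
    then have "r l + q < gdist V E (x l) z + r i" using wl[OF l] z True wi unfolding a_def by linarith
    then have "slack V E x r l z < slack V E x r i z" unfolding slack_def using z by linarith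
    then show ?thesis using z by simp
  next
    case False
    define m where "m = q - a"
    have mb: "m \<le> b" using q lp False unfolding m_def by linarith
    define z where "z = be ! m"
    have z: "p ! q = z" "gdist V E w z = m" "gdist V E z (x j) = b - m" "z \<in> V"
      using F2[of q] beg[OF mb] False q lp unfolding z_def m_def by auto
    have zj: "gdist V E (x j) z = b - m" using z sym xV by metis
    have zw: "gdist V E z w = m" using z sym wV by metis
    have "gdist V E (x l) w \<le> gdist V E (x l) z + gdist V E z w" using tri wl[OF l] z wV by blast
    then have "r l + (b - m) < gdist V E (x l) z + r j" using wl[OF l] zw mb wj ba by linarith
    then have "slack V E x r l z < slack V E x r j z" unfolding slack_def using zj by linarith
    then show ?thesis using z by simp
  qed
  have P3: "slack V E x r i (p ! Suc q) - slack V E x r j (p ! Suc q) \<le> slack V E x r i (p ! q) - slack V E x r j (p ! q)"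
    if q: "Suc q < length p" for q
  proof -
    have e: "E (p ! q) (p ! Suc q)" using pw q unfolding walk_in_def by blast
    have zV: "p ! q \<in> V" "p ! Suc q \<in> V" using walk_nth_V[OF G C pw] q by auto
    have d1: "gdist V E (p ! q) (p ! Suc q) \<le> 1" "gdist V E (p ! Suc q) (p ! q) \<le> 1"
      using gd_edge[OF G C] e symE[OF G C] by blast+
    have ti: "gdist V E (x i) (p ! q) \<le> gdist V E (x i) (p ! Suc q) + 1"
         "gdist V E (x i) (p ! Suc q) \<le> gdist V E (x i) (p ! q) + 1"
      using tri[OF xV(1) zV(2) zV(1)] tri[OF xV(1) zV(1) zV(2)] d1 by linarith+
    have tj: "gdist V E (x j) (p ! q) \<le> gdist V E (x j) (p ! Suc q) + 1"
         "gdist V E (x j) (p ! Suc q) \<le> gdist V E (x j) (p ! q) + 1"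
      using tri[OF xV(2) zV(2) zV(1)] tri[OF xV(2) zV(1) zV(2)] d1 by linarith+
    show ?thesis
    proof (cases "q < a")
      case True
      have "gdist V E (x i) (p ! q) = q" "gdist V E (x i) (p ! Suc q) = Suc q"
        using F1[of q] F1[of "Suc q"] alg(1)[of q] alg(1)[of "Suc q"] True by auto
      then show ?thesis unfolding slack_def using tj by linarith
    next
      case False
      have qb: "Suc q - a \<le> b" "q - a \<le> b" using q lp False by linarith+
      have "p ! q = be ! (q - a)" "p ! Suc q = be ! (Suc q - a)" using F2 False q lp by auto
      then have "gdist V E (p ! q) (x j) = b - (q - a)" "gdist V E (p ! Suc q) (x j) = b - (Suc q - a)"
        using beg(2) qb by auto
      then have "gdist V E (x j) (p ! q) = b - (q - a)" "gdist V E (x j) (p ! Suc q) = b - (Suc q - a)"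
        using sym xV zV by metis+
      moreover have "Suc q - a \<le> b" using qb by simp
      ultimately show ?thesis unfolding slack_def using ti False by linarith
    qed
  qed
  show ?thesis using pw hp lastp P2 P3 by blast
qed

lemma append_tl_hd_last:
  assumes "xs \<noteq> []" "ys \<noteq> []" "last xs = hd ys"
  shows "hd (xs @ tl ys) = hd xs" "last (xs @ tl ys) = last ys"
proof -
  show "hd (xs @ tl ys) = hd xs" using assms by simp
  show "last (xs @ tl ys) = last ys"
  proof (cases "tl ys = []")
    case True
    then show ?thesis using assms by (cases ys) auto
  next
    case False
    then show ?thesis using assms by (cases ys) auto
  qed
qed

lemma conn_hub:
  assumes "c \<in> S" "\<And>x y. E x y \<Longrightarrow> E y x"
    and "\<And>z. z \<in> S \<Longrightarrow> \<exists>xs. walk_in S E xs \<and> hd xs = z \<and> last xs = c"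
  shows "connected_in S E"
  unfolding connected_in_def
proof (intro ballI)
  fix u v assume uv: "u \<in> S" "v \<in> S"
  obtain xs where xs: "walk_in S E xs" "hd xs = u" "last xs = c" using assms(3) uv(1) by blast
  obtain ys where ys: "walk_in S E ys" "hd ys = v" "last ys = c" using assms(3) uv(2) by blast
  have ne: "xs \<noteq> []" "ys \<noteq> []" using xs ys unfolding walk_in_def by auto
  have r: "walk_in S E (rev ys)" using walk_in_rev[OF ys(1)] assms(2) by blast
  have "walk_in S E (xs @ tl (rev ys))" using walk_in_append[OF xs(1) r] xs ys ne by (simp add: hd_rev)
  moreover have "hd (xs @ tl (rev ys)) = u" "last (xs @ tl (rev ys)) = v"
    using append_tl_hd_last[of xs "rev ys"] xs ys ne by (simp_all add: hd_rev last_rev)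
  ultimately show "\<exists>xs. walk_in S E xs \<and> hd xs = u \<and> last xs = v" by blast
qed

lemma shatter_minor:
  assumes G: "simple_graph V E" and C: "connected_in V E"
    and xV: "\<And>i. i < t \<Longrightarrow> x i \<in> V"
    and wit: "\<And>S. S \<subseteq> {..<t} \<Longrightarrow> \<exists>w\<in>V. \<forall>i<t. (gdist V E (x i) w \<le> r i \<longleftrightarrow> i \<in> S)"
  shows "has_complete_minor V E t"
proof (cases "t = 0")
  case True
  then show ?thesis unfolding has_complete_minor_def by auto
next
  case False
  then have t0: "0 < t" by simp
  define s where "s = slack V E x r"
  define own where "own = (\<lambda>z. LEAST l. l < t \<and> (\<forall>m<t. s m z \<le> s l z))"
  have own_props: "own z < t \<and> (\<forall>m<t. s m z \<le> s (own z) z) \<and> (\<forall>m < own z. s m z < s (own z) z)" for z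
  proof -
    define M where "M = Max ((\<lambda>m. s m z) ` {..<t})"
    have "M \<in> (\<lambda>m. s m z) ` {..<t}" unfolding M_def using t0 by (intro Max_in) auto
    then obtain l where l: "l < t" "s l z = M" by auto
    have "\<forall>m<t. s m z \<le> s l z" using l unfolding M_def by auto
    then have ex: "\<exists>l. l < t \<and> (\<forall>m<t. s m z \<le> s l z)" using l by blast
    have P: "own z < t \<and> (\<forall>m<t. s m z \<le> s (own z) z)" unfolding own_def by (rule LeastI_ex[OF ex])
    have "s m z < s (own z) z" if "m < own z" for m
    proof (rule ccontr)
      assume "\<not> s m z < s (own z) z"
      then have "m < t \<and> (\<forall>m'<t. s m' z \<le> s m z)" using P that by force
      then have "own z \<le> m" unfolding own_def by (rule Least_le)
      then show False using that by simp
    qed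
    then show ?thesis using P by blast
  qed
  have own_eq: "own z = l" if "l < t" "\<forall>m<t. s m z \<le> s l z" "\<forall>m<l. s m z < s l z" for z l
    unfolding own_def
  proof (rule Least_equality)
    show "l < t \<and> (\<forall>m<t. s m z \<le> s l z)" using that by blast
    fix y assume y: "y < t \<and> (\<forall>m<t. s m z \<le> s y z)"
    show "l \<le> y"
    proof (rule ccontr)
      assume "\<not> l \<le> y"
      then have "s y z < s l z" using that by simp
      then show False using y that by force
    qed
  qed
  have own_x: "own (x i) = i" if i: "i < t" for i
  proof (rule own_eq[OF i])
    have m: "s m (x i) < s i (x i)" if m: "m < t" "m \<noteq> i" for m
    proof -
      obtain w where w: "w \<in> V" "\<forall>l<t. (gdist V E (x l) w \<le> r l \<longleftrightarrow> l \<in> {i})"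
        using wit[of "{i}"] i by auto
      have "gdist V E (x i) w \<le> r i" "r m < gdist V E (x m) w" using w i m by auto
      moreover have "gdist V E (x m) w \<le> gdist V E (x m) (x i) + gdist V E (x i) w"
        using gd_tri[OF G C] xV i m w by blast
      moreover have "gdist V E (x i) (x i) = 0" using gd_refl[OF G C] xV i by blast
      ultimately show ?thesis unfolding s_def slack_def by linarith
    qed
    then show "\<forall>m<t. s m (x i) \<le> s i (x i)" by (metis order.order_iff_strict)
    show "\<forall>m<i. s m (x i) < s i (x i)" using m i by auto
  qed
  have exP: "\<exists>p. walk_in V E p \<and> hd p = x i \<and> last p = x j \<and>
    (\<forall>q<length p. \<forall>l<t. l \<noteq> i \<longrightarrow> l \<noteq> j \<longrightarrow> s l (p ! q) < max (s i (p ! q)) (s j (p ! q))) \<and>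
    (\<forall>q. Suc q < length p \<longrightarrow> s i (p ! Suc q) - s j (p ! Suc q) \<le> s i (p ! q) - s j (p ! q))"
    if ij: "i < t" "j < t" "i \<noteq> j" for i j
  proof -
    obtain w where w: "w \<in> V" "\<forall>l<t. (gdist V E (x l) w \<le> r l \<longleftrightarrow> l \<in> {i, j})"
      using wit[of "{i,j}"] ij by auto
    show ?thesis unfolding s_def
      by (rule path_props[OF G C xV[OF ij(1)] xV[OF ij(2)] w(1)]) (use w ij xV in \<open>auto simp: not_le\<close>)
  qed
  define Pth where "Pth = (\<lambda>i j. SOME p. walk_in V E p \<and> hd p = x i \<and> last p = x j \<and>
    (\<forall>q<length p. \<forall>l<t. l \<noteq> i \<longrightarrow> l \<noteq> j \<longrightarrow> s l (p ! q) < max (s i (p ! q)) (s j (p ! q))) \<and>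
    (\<forall>q. Suc q < length p \<longrightarrow> s i (p ! Suc q) - s j (p ! Suc q) \<le> s i (p ! q) - s j (p ! q)))"
  have Pth: "walk_in V E (Pth i j) \<and> hd (Pth i j) = x i \<and> last (Pth i j) = x j \<and>
    (\<forall>q<length (Pth i j). \<forall>l<t. l \<noteq> i \<longrightarrow> l \<noteq> j \<longrightarrow> s l (Pth i j ! q) < max (s i (Pth i j ! q)) (s j (Pth i j ! q))) \<and>
    (\<forall>q. Suc q < length (Pth i j) \<longrightarrow> s i (Pth i j ! Suc q) - s j (Pth i j ! Suc q) \<le> s i (Pth i j ! q) - s j (Pth i j ! q))"
    if ij: "i < t" "j < t" "i \<noteq> j" for i j
    unfolding Pth_def by (rule someI_ex[OF exP[OF ij]])
  have own_path: "own (Pth i j ! q) = (if s i (Pth i j ! q) > s j (Pth i j ! q) \<or>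
        (s i (Pth i j ! q) = s j (Pth i j ! q) \<and> i < j) then i else j)"
    if ij: "i < t" "j < t" "i \<noteq> j" and q: "q < length (Pth i j)" for i j q
  proof -
    let ?z = "Pth i j ! q"
    have oth: "\<forall>l<t. l \<noteq> i \<longrightarrow> l \<noteq> j \<longrightarrow> s l ?z < max (s i ?z) (s j ?z)" using Pth[OF ij] q by blast
    show ?thesis
    proof (cases "s i ?z > s j ?z \<or> (s i ?z = s j ?z \<and> i < j)")
      case True
      have lt: "s m ?z < s i ?z \<or> (m = j \<and> s m ?z = s i ?z \<and> i < j)" if "m < t" "m \<noteq> i" for m
        using oth True that by (cases "m = j") (auto simp: max_def split: if_splits)
      have "own ?z = i"
      proof (rule own_eq[OF ij(1)])
        show "\<forall>m<t. s m ?z \<le> s i ?z" using lt by (metis order.order_iff_strict order_refl)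
        show "\<forall>m<i. s m ?z < s i ?z"
        proof (intro allI impI)
          fix m assume "m < i"
          then show "s m ?z < s i ?z" using lt[of m] ij by auto
        qed
      qed
      then show ?thesis using True by simp
    next
      case False
      have lt: "s m ?z < s j ?z \<or> (m = i \<and> s m ?z = s j ?z \<and> j < i)" if "m < t" "m \<noteq> j" for m
        using oth False that ij by (cases "m = i") (auto simp: max_def split: if_splits)
      have "own ?z = j"
      proof (rule own_eq[OF ij(2)])
        show "\<forall>m<t. s m ?z \<le> s j ?z" using lt by (metis order.order_iff_strict order_refl)
        show "\<forall>m<j. s m ?z < s j ?z"
        proof (intro allI impI)
          fix m assume "m < j"
          then show "s m ?z < s j ?z" using lt[of m] ij by auto
        qed
      qed
      then show ?thesis using False by simp
    qed
  qed
  have mono: "s i (Pth i j ! q') - s j (Pth i j ! q') \<le> s i (Pth i j ! q) - s j (Pth i j ! q)"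
    if ij: "i < t" "j < t" "i \<noteq> j" and q: "q \<le> q'" "q' < length (Pth i j)" for i j q q'
    using q
  proof (induction q' rule: dec_induct)
    case base then show ?case by simp
  next
    case (step n)
    then show ?case using Pth[OF ij] by (meson Suc_lessD order.trans)
  qed
  have own_pre: "own (Pth i j ! q) = i"
    if ij: "i < t" "j < t" "i \<noteq> j" and q: "q \<le> q'" "q' < length (Pth i j)" "own (Pth i j ! q') = i" for i j q q'
    using own_path[OF ij q(2)] own_path[OF ij, of q] mono[OF ij q(1,2)] q ij
    by (auto split: if_splits)
  have own_suf: "own (Pth i j ! q') = j"
    if ij: "i < t" "j < t" "i \<noteq> j" and q: "q \<le> q'" "q' < length (Pth i j)" "own (Pth i j ! q) = j" for i j q q'
    using own_path[OF ij q(2)] own_path[OF ij, of q] mono[OF ij q(1,2)] q ij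
    by (auto split: if_splits)
  define U where "U = x ` {..<t} \<union> (\<Union>i<t. \<Union>j\<in>{..<t} - {i}. set (Pth i j))"
  define B where "B = (\<lambda>i. {z \<in> U. own z = i})"
  have UV: "U \<subseteq> V" unfolding U_def using xV Pth unfolding walk_in_def by fastforce
  have xB: "x i \<in> B i" if "i < t" for i unfolding B_def U_def using own_x that by auto
  have inU: "Pth i j ! q \<in> U" if ij: "i < t" "j < t" "i \<noteq> j" and q: "q < length (Pth i j)" for i j q
    unfolding U_def using ij nth_mem[OF q] by blast
  have hub: "\<exists>xs. walk_in (B i) E xs \<and> hd xs = z \<and> last xs = x i" if z: "z \<in> B i" "i < t" for z i
  proof -
    have zU: "z \<in> U" "own z = i" using z unfolding B_def by auto
    show ?thesis
    proof (cases "z \<in> x ` {..<t}")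
      case True
      then obtain l where "l < t" "z = x l" by auto
      then have "z = x i" using own_x zU by auto
      then show ?thesis using xB[OF z(2)] by (intro exI[of _ "[z]"]) (auto simp: walk_in_def)
    next
      case False
      then obtain a b where ab: "a < t" "b < t" "a \<noteq> b" "z \<in> set (Pth a b)" using zU unfolding U_def by auto
      then obtain q where q: "q < length (Pth a b)" "z = Pth a b ! q" by (auto simp: in_set_conv_nth)
      let ?p = "Pth a b"
      have pw: "walk_in V E ?p" "hd ?p = x a" "last ?p = x b" using Pth[OF ab(1-3)] by auto
      have ne: "?p \<noteq> []" using pw unfolding walk_in_def by auto
      have "own z \<in> {a, b}" using own_path[OF ab(1-3) q(1)] q by auto
      then consider "i = a" | "i = b" using zU by auto
      then show ?thesis
      proof cases
        case 1
        let ?w = "rev (take (Suc q) ?p)"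
        have "walk_in V E ?w" using walk_in_rev[OF walk_in_take[OF pw(1) q(1)]] symE[OF G C] by blast
        moreover have "set ?w \<subseteq> B i"
        proof
          fix y assume "y \<in> set ?w"
          then obtain q' where "q' < Suc q" "y = ?p ! q'" using q(1) by (auto simp: in_set_conv_nth)
          then show "y \<in> B i" unfolding B_def using own_pre[OF ab(1-3), of q' q] q zU 1 inU[OF ab(1-3)]
            by auto
        qed
        moreover have "hd ?w = z"
        proof -
          have "take (Suc q) ?p \<noteq> []" using ne by simp
          then have "last (take (Suc q) ?p) = take (Suc q) ?p ! (length (take (Suc q) ?p) - 1)"
            by (rule last_conv_nth)
          also have "\<dots> = z" using q by simp
          finally show ?thesis by (simp add: hd_rev)
        qed
        moreover have "last ?w = x i" using pw 1 ne by (simp add: last_rev)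
        ultimately show ?thesis unfolding walk_in_def by blast
      next
        case 2
        let ?w = "drop q ?p"
        have "walk_in V E ?w" using walk_in_drop[OF pw(1) q(1)] by blast
        moreover have "set ?w \<subseteq> B i"
        proof
          fix y assume "y \<in> set ?w"
          then obtain q' where "q' < length ?p - q" "y = ?p ! (q + q')" using q(1) by (auto simp: in_set_conv_nth)
          then show "y \<in> B i" unfolding B_def using own_suf[OF ab(1-3), of q "q + q'"] q zU 2 inU[OF ab(1-3)]
            by auto
        qed
        moreover have "hd ?w = z" using q by (simp add: hd_drop_conv_nth)
        moreover have "last ?w = x i" using pw 2 q by simp
        ultimately show ?thesis unfolding walk_in_def by blast
      qed
    qed
  qed
  have edge: "\<exists>y\<in>B i. \<exists>y'\<in>B j. E y y'" if ij: "i < t" "j < t" "i \<noteq> j" for i j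
  proof -
    let ?p = "Pth i j"
    have pw: "walk_in V E ?p" "hd ?p = x i" "last ?p = x j" using Pth[OF ij] by auto
    have ne: "?p \<noteq> []" using pw unfolding walk_in_def by auto
    have o0: "own (?p ! 0) = i" using pw ne own_x ij by (simp add: hd_conv_nth[symmetric])
    have oL: "own (?p ! (length ?p - 1)) = j" using pw ne own_x[OF ij(2)] last_conv_nth[OF ne] by simp
    have ex: "\<exists>q. q < length ?p \<and> own (?p ! q) = j" using oL ne by (intro exI[of _ "length ?p - 1"]) auto
    define q0 where "q0 = (LEAST q. q < length ?p \<and> own (?p ! q) = j)"
    have q0: "q0 < length ?p" "own (?p ! q0) = j" using LeastI_ex[OF ex] unfolding q0_def by auto
    have "q0 \<noteq> 0" using q0 o0 ij by (metis)
    then obtain q where qq: "q0 = Suc q" by (cases q0) auto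
    have "own (?p ! q) \<noteq> j" using not_less_Least[of q "\<lambda>q. q < length ?p \<and> own (?p ! q) = j"] q0 qq
      unfolding q0_def by auto
    then have "own (?p ! q) = i" using own_path[OF ij, of q] q0 qq by (auto split: if_splits)
    moreover have "E (?p ! q) (?p ! Suc q)" using pw(1) q0 qq unfolding walk_in_def by auto
    ultimately show ?thesis unfolding B_def using inU[OF ij, of q] inU[OF ij, of "Suc q"] q0 qq
      by (intro bexI[of _ "?p ! q"] bexI[of _ "?p ! Suc q"]) auto
  qed
  show ?thesis unfolding has_complete_minor_def
  proof (intro exI[of _ B] conjI allI impI)
    fix i assume i: "i < t"
    show "B i \<noteq> {}" using xB[OF i] by auto
    show "B i \<subseteq> V" using UV unfolding B_def by auto
    show "connected_in (B i) E"
      by (rule conn_hub[OF xB[OF i]]) (use symE[OF G C] hub i in auto)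
  next
    fix i j assume "i < t" "j < t" "i \<noteq> j"
    then show "B i \<inter> B j = {}" "\<exists>x\<in>B i. \<exists>y\<in>B j. E x y" using edge unfolding B_def by auto
  qed
qed



theorem theorem5:
  fixes V :: "'a set" and E :: "'a \<Rightarrow> 'a \<Rightarrow> bool" and R :: "'a set" and t d k n :: nat
  assumes "simple_graph V E"
    and "V \<noteq> {}"
    and "connected_in V E"
    and "\<not> has_complete_minor V E t"
    and "diameter V E = d"
    and "card V = n"
    and "resolving_set V E R"
    and "card R = k"
  shows "n \<le> (d * k + 1) ^ (t - 1) + 1"
proof -
  note G = assms(1) and C = assms(3)
  have finV: "finite V" using G unfolding simple_graph_def by blast
  have RV: "R \<subseteq> V" using assms(7) unfolding resolving_set_def by blast
  have finR: "finite R" using finite_subset[OF RV finV] .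
  have t0: "t \<noteq> 0"
  proof
    assume "t = 0"
    then have "has_complete_minor V E t" unfolding has_complete_minor_def by auto
    then show False using assms(4) by blast
  qed
  have diam: "gdist V E u v \<le> d" if "u \<in> V" "v \<in> V" for u v
  proof -
    have eq: "{gdist V E u v | u v. u \<in> V \<and> v \<in> V} = (\<lambda>(u, v). gdist V E u v) ` (V \<times> V)" by auto
    have "finite {gdist V E u v | u v. u \<in> V \<and> v \<in> V}" unfolding eq using finV by simp
    moreover have "gdist V E u v \<in> {gdist V E u v | u v. u \<in> V \<and> v \<in> V}" using that by blast
    ultimately have "gdist V E u v \<le> Max {gdist V E u v | u v. u \<in> V \<and> v \<in> V}" by (rule Max_ge)
    then show ?thesis using assms(5) unfolding diameter_def by simp
  qed
  define X where "X = R \<times> {..<d}"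
  define T where "T = (\<lambda>w. {p \<in> X. gdist V E (fst p) w \<le> snd p})"
  define F where "F = T ` V"
  have finX: "finite X" unfolding X_def using finR by simp
  have cX: "card X = k * d" unfolding X_def using assms(8) by (simp add: card_cartesian_product)
  have FX: "F \<subseteq> Pow X" unfolding F_def T_def by auto
  have inj: "inj_on T V"
  proof (rule inj_onI, rule ccontr)
    fix u w assume uw: "u \<in> V" "w \<in> V" "T u = T w" "u \<noteq> w"
    obtain z where z: "z \<in> R" "gdist V E z u \<noteq> gdist V E z w"
      using assms(7) uw unfolding resolving_set_def by blast
    have zV: "z \<in> V" using z RV by blast
    show False
    proof (cases "gdist V E z u < gdist V E z w")
      case True
      then have "(z, gdist V E z u) \<in> T u" "(z, gdist V E z u) \<notin> T w"
        unfolding T_def X_def using z diam[OF zV uw(2)] by auto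
      then show False using uw by simp
    next
      case False
      then have lt: "gdist V E z w < gdist V E z u" using z by linarith
      then have "(z, gdist V E z w) \<in> T w" "(z, gdist V E z w) \<notin> T u"
        unfolding T_def X_def using z diam[OF zV uw(1)] by auto
      then show False using uw by simp
    qed
  qed
  have cF: "card F = n" unfolding F_def using card_image[OF inj] assms(6) by simp
  have nosh: "\<forall>Y\<subseteq>X. card Y = Suc (t - 1) \<longrightarrow> \<not> shatters F Y"
  proof (intro allI impI notI)
    fix Y assume Y: "Y \<subseteq> X" "card Y = Suc (t - 1)" and sh: "shatters F Y"
    have cY: "card Y = t" using Y t0 by simp
    have finY: "finite Y" using finite_subset[OF Y(1) finX] .
    obtain f where f: "bij_betw f {0..<card Y} Y" using ex_bij_betw_nat_finite[OF finY] by blast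
    then have f': "bij_betw f {..<t} Y" using cY by (simp add: lessThan_atLeast0)
    have injf: "inj_on f {..<t}" and fY: "f ` {..<t} = Y" using f' unfolding bij_betw_def by auto
    define x where "x = (\<lambda>i. fst (f i))"
    define r where "r = (\<lambda>i. snd (f i))"
    have fX: "f i \<in> X" if "i < t" for i using fY Y(1) that by auto
    have xV: "x i \<in> V" if "i < t" for i using fX[OF that] RV unfolding x_def X_def by auto
    have "has_complete_minor V E t"
    proof (rule shatter_minor[OF G C xV])
      fix S assume S: "S \<subseteq> {..<t}"
      have "f ` S \<subseteq> Y" using S fY by auto
      then obtain A where A: "A \<in> F" "A \<inter> Y = f ` S" using sh unfolding shatters_def by blast
      then obtain w where w: "w \<in> V" "A = T w" unfolding F_def by blast
      have "gdist V E (x i) w \<le> r i \<longleftrightarrow> i \<in> S" if i: "i < t" for i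
      proof -
        have "gdist V E (x i) w \<le> r i \<longleftrightarrow> f i \<in> A" using w fX[OF i] unfolding T_def x_def r_def by auto
        also have "\<dots> \<longleftrightarrow> f i \<in> f ` S" using A fY i by auto
        also have "\<dots> \<longleftrightarrow> i \<in> S" using inj_on_image_mem_iff[OF injf _ S] i by auto
        finally show ?thesis .
      qed
      then show "\<exists>w\<in>V. \<forall>i<t. (gdist V E (x i) w \<le> r i) = (i \<in> S)" using w by blast
    qed
    then show False using assms(4) by blast
  qed
  have "card F \<le> (card X + 1) ^ (t - 1)" by (rule sauer_shelah[OF finX FX nosh])
  then have "n \<le> (d * k + 1) ^ (t - 1)" using cF cX by (simp add: mult.commute)
  then show ?thesis by simp
qed


end
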